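(* Let $g>0$, $\gamma>0$, $a\in(0,\nu_1)$, and let $\hat\nu:\mathbb R\to[\nu_0,\nu_1]$ be a stretch-limiting constitutive function as in the context. Let $(\lambda,\mu)$ with $\lambda>0$ be the unique solution of $$a\mathbf i+0\,\mathbf k=\int_0^1\frac{\hat\nu(\delta(s))}{\delta(s)}\big(\lambda\mathbf i+(\mu+g\gamma s)\mathbf k\big)\,ds,\qquad \delta(s)=\sqrt{\lambda^2+(\mu+g\gamma s)^2}$$ (the tensile uniform catenary with supports at $\mathbf 0$ and $a\mathbf i$, with tension $N(s)=\delta(s)$). Then the catenary is inextensible, i.e. $\delta(s)\ge N_1$ for all $s\in[0,1]$ (equivalently stretch $\nu\equiv\nu_1$), if and only if $$\nu_1\frac{2N_1}{g\gamma}\sinh^{-1}\frac{g\gamma}{2N_1}\le a<\nu_1.$$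
   Context: Stretch-limited constitutive function: constants $N_0<0<N_1$, $0<\nu_0<1<\nu_1$ with $\hat\nu(N)=\nu_0$ for $N\le N_0$, $\hat\nu(N)=\nu_1$ for $N\ge N_1$, $\hat\nu\in C^\infty([N_0,N_1];[\nu_0,\nu_1])$, $\hat\nu(0)=1$, $\hat\nu'\ge c>0$ on $[N_0,N_1]$. The string is uniform with mass $\gamma$ per unit reference length, parametrized by $s\in[0,1]$, with $\mathbf r(0)=\mathbf 0$, $\mathbf r(1)=a\mathbf i$, contact force $\mathbf n(s)=\lambda\mathbf i+(\mu+g\gamma s)\mathbf k$, and stretch $|\mathbf r_s|=\hat\nu(N)$. It is a known fact (existence and uniqueness of tensile states) that for $a>0$, $a^2<\nu_1^2$ there is exactly one solution $(\lambda,\mu)$ of the displayed equation with $\lambda>0$; for it one has $\mu=-g\gamma/2$. *)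

theory Defs
  imports "HOL-Analysis.Analysis"
begin

definition stretch_limited ::
  "real \<Rightarrow> real \<Rightarrow> real \<Rightarrow> real \<Rightarrow> (real \<Rightarrow> real) \<Rightarrow> bool" where
  "stretch_limited N0 N1 \<nu>0 \<nu>1 \<nu> \<longleftrightarrow>
     N0 < 0 \<and> 0 < N1 \<and> 0 < \<nu>0 \<and> \<nu>0 < 1 \<and> 1 < \<nu>1 \<and>
     (\<forall>N. \<nu>0 \<le> \<nu> N \<and> \<nu> N \<le> \<nu>1) \<and>
     (\<forall>N. N \<le> N0 \<longrightarrow> \<nu> N = \<nu>0) \<and>
     (\<forall>N. N1 \<le> N \<longrightarrow> \<nu> N = \<nu>1) \<and>
     \<nu> 0 = 1 \<and>
     (\<exists>D :: nat \<Rightarrow> real \<Rightarrow> real.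
        (\<forall>x\<in>{N0..N1}. D 0 x = \<nu> x) \<and>
        (\<forall>k. \<forall>x\<in>{N0..N1}. (D k has_real_derivative D (Suc k) x) (at x within {N0..N1})) \<and>
        (\<exists>c>0. \<forall>x\<in>{N0..N1}. c \<le> D 1 x))"

definition cat_delta :: "real \<Rightarrow> real \<Rightarrow> real \<Rightarrow> real \<Rightarrow> real \<Rightarrow> real" where
  "cat_delta g \<gamma> lam \<mu> s = sqrt (lam\<^sup>2 + (\<mu> + g * \<gamma> * s)\<^sup>2)"

end

theory Submission
  imports Defs
begin

lemma nu_props:
  assumes "stretch_limited N0 N1 \<nu>0 \<nu>1 \<nu>"
  shows "continuous_on UNIV \<nu>" and "\<And>x y. x \<le> y \<Longrightarrow> \<nu> x \<le> \<nu> y"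
proof -
  from assms obtain D c where
    h: "N0 < 0" "0 < N1" "\<forall>N. \<nu>0 \<le> \<nu> N \<and> \<nu> N \<le> \<nu>1"
       "\<forall>N. N \<le> N0 \<longrightarrow> \<nu> N = \<nu>0" "\<forall>N. N1 \<le> N \<longrightarrow> \<nu> N = \<nu>1"
       "\<forall>x\<in>{N0..N1}. D 0 x = \<nu> x"
       "\<forall>k. \<forall>x\<in>{N0..N1}. (D k has_real_derivative D (Suc k) x) (at x within {N0..N1})"
       "c > 0" "\<forall>x\<in>{N0..N1}. c \<le> D 1 x"
    unfolding stretch_limited_def by blast
  have cD: "continuous_on {N0..N1} (D 0)"
    by (rule DERIV_continuous_on) (use h(7) in blast)
  have c2: "continuous_on {N0..N1} \<nu>"
    using continuous_on_eq[OF cD] h(6) by auto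
  have c1: "continuous_on {..N0} \<nu>"
    using continuous_on_eq[OF continuous_on_const[of "{..N0}" "\<nu>0"]] h(4) by auto
  have c3: "continuous_on {N1..} \<nu>"
    using continuous_on_eq[OF continuous_on_const[of "{N1..}" "\<nu>1"]] h(5) by auto
  have "continuous_on ({..N0} \<union> {N0..N1} \<union> {N1..}) \<nu>"
    by (intro continuous_on_closed_Un c1 c2 c3) auto
  moreover have "{..N0} \<union> {N0..N1} \<union> {N1..} = (UNIV::real set)" using h by auto
  ultimately show "continuous_on UNIV \<nu>" by simp
  have monoD: "D 0 x \<le> D 0 y" if "N0 \<le> x" "x \<le> y" "y \<le> N1" for x y
  proof (rule DERIV_nonneg_imp_increasing_open[OF that(2)])
    fix z assume z: "x < z" "z < y"
    have "(D 0 has_real_derivative D 1 z) (at z within {N0..N1})"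
      using h(7) z that by auto
    then have "(D 0 has_real_derivative D 1 z) (at z within {N0<..<N1})"
      by (rule DERIV_subset) auto
    then have "(D 0 has_real_derivative D 1 z) (at z)"
      using at_within_open[of z "{N0<..<N1}"] z that by auto
    moreover have "D 1 z \<ge> 0"
    proof -
      have "z \<in> {N0..N1}" using z that by auto
      then have "c \<le> D 1 z" using h(9) by blast
      then show ?thesis using h(8) by linarith
    qed
    ultimately show "\<exists>y. DERIV (D 0) z :> y \<and> y \<ge> 0" by blast
  next
    show "continuous_on {x..y} (D 0)" by (rule continuous_on_subset[OF cD]) (use that in auto)
  qed
  show "\<nu> x \<le> \<nu> y" if "x \<le> y" for x y
  proof -
    consider "y \<le> N0" | "N1 \<le> x" | "x \<le> N0" | "N1 \<le> y" | "N0 \<le> x" "y \<le> N1" by linarith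
    then show ?thesis
    proof cases
      case 1 then show ?thesis using h(4) that by auto
    next
      case 2 then show ?thesis using h(5) that by auto
    next
      case 3 then show ?thesis using h(3,4) by auto
    next
      case 4 then show ?thesis using h(3,5) by auto
    next
      case 5 then show ?thesis using monoD[OF 5(1) that 5(2)] h(6) that by auto
    qed
  qed
qed

lemma ftc_arsinh:
  fixes x k a b :: real
  assumes "x > 0" "k > 0" "a \<le> b"
  shows "((\<lambda>s. x / sqrt (x\<^sup>2 + (k * s - k/2)\<^sup>2)) has_integral
          ((x/k) * arsinh ((k * b - k/2)/x) - (x/k) * arsinh ((k * a - k/2)/x))) {a..b}"
proof (rule fundamental_theorem_of_calculus[OF assms(3)])
  fix s assume "s \<in> {a..b}"
  have e: "sqrt (((k * s - k/2)/x)\<^sup>2 + 1) = sqrt (x\<^sup>2 + (k * s - k/2)\<^sup>2) / x"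
  proof -
    have "((k * s - k/2)/x)\<^sup>2 + 1 = (x\<^sup>2 + (k * s - k/2)\<^sup>2) / x\<^sup>2"
      using assms by (simp add: field_simps power2_eq_square)
    then show ?thesis using assms by (simp add: real_sqrt_divide)
  qed
  have "x\<^sup>2 > 0" using assms by simp
  then have pos: "sqrt (x\<^sup>2 + (k * s - k/2)\<^sup>2) > 0" by (intro real_sqrt_gt_zero add_pos_nonneg) auto
  have d1: "((\<lambda>s. (k * s - k/2)/x) has_real_derivative k/x) (at s within {a..b})"
    using assms by (auto intro!: derivative_eq_intros)
  have "((\<lambda>s. (x/k) * arsinh ((k * s - k/2)/x)) has_real_derivative
          (x/k) * ((1 / sqrt (((k * s - k/2)/x)\<^sup>2 + 1)) * (k/x))) (at s within {a..b})"
    by (rule DERIV_cmult, rule DERIV_chain2[OF arsinh_real_has_field_derivative d1])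
  moreover have "(x/k) * ((1 / sqrt (((k * s - k/2)/x)\<^sup>2 + 1)) * (k/x)) = x / sqrt (x\<^sup>2 + (k * s - k/2)\<^sup>2)"
    unfolding e using assms pos by (simp add: field_simps)
  ultimately show "((\<lambda>s. (x/k) * arsinh ((k * s - k/2)/x)) has_vector_derivative
          x / sqrt (x\<^sup>2 + (k * s - k/2)\<^sup>2)) (at s within {a..b})"
    by (simp add: has_real_derivative_iff_has_vector_derivative)
qed

lemma frac_less:
  fixes u v P R :: real
  assumes "0 \<le> u" "0 < v" "0 < P" "0 < R" "u\<^sup>2 * R < v\<^sup>2 * P"
  shows "u / sqrt P < v / sqrt R"
proof -
  have "sqrt (u\<^sup>2 * R) < sqrt (v\<^sup>2 * P)" using assms(5) by simp
  then have "u * sqrt R < v * sqrt P" using assms by (simp add: real_sqrt_mult)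
  then show ?thesis using assms by (simp add: field_simps)
qed

definition Qf :: "real \<Rightarrow> real \<Rightarrow> real" where
  "Qf k x = (2*x/k) * arsinh (k/(2*x))"

lemma Q_full:
  fixes x k :: real
  assumes "x > 0" "k > 0"
  shows "((\<lambda>s. x / sqrt (x\<^sup>2 + (k * s - k/2)\<^sup>2)) has_integral Qf k x) {0..1}"
proof -
  have eq: "(x/k) * arsinh ((k * 1 - k/2)/x) - (x/k) * arsinh ((k * 0 - k/2)/x) = Qf k x"
  proof -
    have "(k * 1 - k/2)/x = k/(2*x)" "(k * 0 - k/2)/x = - (k/(2*x))" by (auto simp: field_simps)
    then show ?thesis unfolding Qf_def by (simp add: field_simps)
  qed
  have "0 \<le> (1::real)" by simp
  from ftc_arsinh[OF assms this, unfolded eq] show ?thesis .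
qed

lemma Q_half:
  fixes x k :: real
  assumes "x > 0" "k > 0"
  shows "((\<lambda>s. x / sqrt (x\<^sup>2 + (k * s - k/2)\<^sup>2)) has_integral Qf k x / 2) {0..1/2}"
proof -
  have eq: "(x/k) * arsinh ((k * (1/2) - k/2)/x) - (x/k) * arsinh ((k * 0 - k/2)/x) = Qf k x / 2"
  proof -
    have "(k * (1/2) - k/2)/x = 0" "(k * 0 - k/2)/x = - (k/(2*x))" by (auto simp: field_simps)
    then show ?thesis unfolding Qf_def by (simp add: field_simps)
  qed
  have "0 \<le> (1/2::real)" by simp
  from ftc_arsinh[OF assms this, unfolded eq] show ?thesis .
qed

lemma Q_strict:
  fixes x1 x2 k :: real
  assumes "0 < x1" "x1 < x2" "k > 0"
  shows "Qf k x1 < Qf k x2"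
proof -
  have c: "continuous_on {0..1/2} (\<lambda>s. x / sqrt (x\<^sup>2 + (k * s - k/2)\<^sup>2))" if "x > 0" for x
    using that by (intro continuous_intros) (auto simp: add_pos_nonneg)
  have "integral {0..1/2} (\<lambda>s. x1 / sqrt (x1\<^sup>2 + (k * s - k/2)\<^sup>2))
      < integral {0..1/2} (\<lambda>s. x2 / sqrt (x2\<^sup>2 + (k * s - k/2)\<^sup>2))"
  proof (rule integral_less_real[OF c c])
    show "x1 > 0" "x2 > 0" using assms by auto
    show "{0<..<1/2::real} \<noteq> {}" by (auto intro: exI[of _ "1/4"])
    fix s :: real assume s: "s \<in> {0<..<1/2}"
    have t: "(k * s - k/2) \<noteq> 0" using s assms by auto
    then have t2: "(k * s - k/2)\<^sup>2 > 0" by simp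
    show "x1 / sqrt (x1\<^sup>2 + (k * s - k/2)\<^sup>2) < x2 / sqrt (x2\<^sup>2 + (k * s - k/2)\<^sup>2)"
    proof (rule frac_less)
      show "x1\<^sup>2 * (x2\<^sup>2 + (k * s - k/2)\<^sup>2) < x2\<^sup>2 * (x1\<^sup>2 + (k * s - k/2)\<^sup>2)"
        using t2 assms by (simp add: algebra_simps power_strict_mono)
    qed (use assms t2 in \<open>auto intro: add_pos_nonneg\<close>)
  qed
  then show ?thesis
    using integral_unique[OF Q_half[of x1 k]] integral_unique[OF Q_half[of x2 k]] assms by simp
qed

lemma phi_strict:
  fixes \<nu> :: "real \<Rightarrow> real" and lam p q :: real
  assumes mono: "\<And>x y. x \<le> y \<Longrightarrow> \<nu> x \<le> \<nu> y" and pos: "\<And>N. \<nu> N > 0"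
    and lam: "lam > 0" and pq: "q < p"
  shows "\<nu> (sqrt (lam\<^sup>2 + q\<^sup>2)) / sqrt (lam\<^sup>2 + q\<^sup>2) * q
       < \<nu> (sqrt (lam\<^sup>2 + p\<^sup>2)) / sqrt (lam\<^sup>2 + p\<^sup>2) * p"
proof -
  define \<phi> where "\<phi> t = \<nu> (sqrt (lam\<^sup>2 + t\<^sup>2)) * (t / sqrt (lam\<^sup>2 + t\<^sup>2))" for t
  have odd: "\<phi> (-t) = - \<phi> t" for t unfolding \<phi>_def by simp
  have l2: "lam\<^sup>2 > 0" using lam by simp
  have nn: "\<phi> t \<ge> 0" if "t \<ge> 0" for t
    unfolding \<phi>_def using that pos[of "sqrt (lam\<^sup>2 + t\<^sup>2)"] by simp
  have pp: "\<phi> t > 0" if "t > 0" for t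
    unfolding \<phi>_def using that pos[of "sqrt (lam\<^sup>2 + t\<^sup>2)"] l2
    by (simp add: add_pos_nonneg)
  have inc: "\<phi> y < \<phi> x" if "0 \<le> y" "y < x" for x y
  proof -
    have sq: "y\<^sup>2 \<le> x\<^sup>2" using that by (simp add: power_mono)
    have "sqrt (lam\<^sup>2 + y\<^sup>2) \<le> sqrt (lam\<^sup>2 + x\<^sup>2)" using sq by simp
    then have m: "\<nu> (sqrt (lam\<^sup>2 + y\<^sup>2)) \<le> \<nu> (sqrt (lam\<^sup>2 + x\<^sup>2))" by (rule mono)
    have f: "y / sqrt (lam\<^sup>2 + y\<^sup>2) < x / sqrt (lam\<^sup>2 + x\<^sup>2)"
    proof (rule frac_less)
      have "y\<^sup>2 < x\<^sup>2" using that by (simp add: power_strict_mono)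
      then show "y\<^sup>2 * (lam\<^sup>2 + x\<^sup>2) < x\<^sup>2 * (lam\<^sup>2 + y\<^sup>2)" using l2
        by (simp add: algebra_simps)
    qed (use that l2 in \<open>auto intro: add_pos_nonneg\<close>)
    have f0: "0 \<le> y / sqrt (lam\<^sup>2 + y\<^sup>2)" using that by simp
    have "\<phi> y \<le> \<nu> (sqrt (lam\<^sup>2 + x\<^sup>2)) * (y / sqrt (lam\<^sup>2 + y\<^sup>2))"
      unfolding \<phi>_def using m f0 by (rule mult_right_mono)
    also have "\<dots> < \<phi> x" unfolding \<phi>_def by (rule mult_strict_left_mono[OF f pos])
    finally show ?thesis .
  qed
  have "\<phi> q < \<phi> p"
  proof -
    consider "0 \<le> q" | "p \<le> 0" | "q < 0" "0 < p" by linarith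
    then show ?thesis
    proof cases
      case 1 then show ?thesis using inc pq by blast
    next
      case 2 then have "\<phi> (-p) < \<phi> (-q)" using inc pq by auto
      then show ?thesis using odd by simp
    next
      case 3 then have "\<phi> (-q) > 0" "\<phi> p > 0" using pp by auto
      then show ?thesis using odd[of q] by simp
    qed
  qed
  then show ?thesis unfolding \<phi>_def by simp
qed

lemma refl01: "(\<lambda>x::real. -x + 1) ` {0..1} = {0..1}"
proof
  show "(\<lambda>x::real. -x + 1) ` {0..1} \<subseteq> {0..1}" by auto
  show "{0..1} \<subseteq> (\<lambda>x::real. -x + 1) ` {0..1}"
  proof
    fix x :: real assume "x \<in> {0..1}"
    then show "x \<in> (\<lambda>x::real. -x + 1) ` {0..1}"
      by (intro image_eqI[where x="1 - x"]) auto
  qed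
qed

lemma mu_half:
  fixes \<nu> :: "real \<Rightarrow> real" and lam k \<mu> :: real
  assumes cont: "continuous_on UNIV \<nu>"
    and mono: "\<And>x y. x \<le> y \<Longrightarrow> \<nu> x \<le> \<nu> y" and pos: "\<And>N. \<nu> N > 0"
    and lam: "lam > 0" and k: "k > 0"
    and int: "((\<lambda>s. \<nu> (sqrt (lam\<^sup>2 + (\<mu> + k * s)\<^sup>2)) / sqrt (lam\<^sup>2 + (\<mu> + k * s)\<^sup>2) * (\<mu> + k * s))
            has_integral 0) {0..1}"
  shows "\<mu> = - k / 2"
proof -
  define \<phi> where "\<phi> t = \<nu> (sqrt (lam\<^sup>2 + t\<^sup>2)) / sqrt (lam\<^sup>2 + t\<^sup>2) * t" for t
  have odd: "\<phi> (-t) = - \<phi> t" for t unfolding \<phi>_def by simp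
  have strict: "\<phi> q < \<phi> p" if "q < p" for p q
    unfolding \<phi>_def by (rule phi_strict[OF mono pos lam that])
  have l2: "lam\<^sup>2 > 0" using lam by simp
  have cphi: "continuous_on UNIV \<phi>"
    unfolding \<phi>_def
    by (intro continuous_intros continuous_on_compose2[OF cont]) (use l2 in \<open>auto intro: add_pos_nonneg\<close>)
  define f where "f s = \<phi> (\<mu> + k * s)" for s
  have fi: "(f has_integral 0) {0..1}" using int unfolding f_def \<phi>_def .
  have "((\<lambda>x. f ((-1) *\<^sub>R x + 1)) has_integral (1 / (\<bar>-1\<bar> ^ DIM(real))) *\<^sub>R 0)
     ((\<lambda>x. (1 / (-1)) *\<^sub>R x + -((1 / (-1)) *\<^sub>R 1)) ` cbox 0 1)"
    by (rule has_integral_affinity) (use fi in auto)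
  then have fr: "((\<lambda>s. f (1 - s)) has_integral 0) {0..1}"
    using refl01 by simp
  have sumi: "((\<lambda>s. f s + f (1 - s)) has_integral 0) {0..1}"
    using has_integral_add[OF fi fr] by simp
  have cf: "continuous_on {0..1} (\<lambda>s. f s + f (1 - s))"
    unfolding f_def
    by (intro continuous_intros continuous_on_compose2[OF cphi]) auto
  have c0: "continuous_on {0..1::real} (\<lambda>s. 0::real)" by simp
  have ne: "{0<..<1::real} \<noteq> {}" by (auto intro: exI[of _ "1/2"])
  have I0: "integral {0..1} (\<lambda>s. f s + f (1 - s)) = 0" using sumi by (rule integral_unique)
  have Z: "integral {0..1::real} (\<lambda>s. 0::real) = 0" by simp
  show ?thesis
  proof (rule ccontr)
    assume "\<mu> \<noteq> - k / 2"
    then consider "2 * \<mu> + k > 0" | "2 * \<mu> + k < 0" by linarith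
    then show False
    proof cases
      case 1
      have "integral {0..1} (\<lambda>s::real. 0::real) < integral {0..1} (\<lambda>s. f s + f (1 - s))"
      proof (rule integral_less_real[OF c0 cf ne])
        fix s :: real
        have "\<phi> (- (\<mu> + k * (1 - s))) < \<phi> (\<mu> + k * s)" using 1 by (intro strict) (simp add: algebra_simps)
        then show "0 < f s + f (1 - s)" unfolding f_def using odd[of "\<mu> + k * (1 - s)"] by linarith
      qed
      then show False using I0 Z by simp
    next
      case 2
      have "integral {0..1} (\<lambda>s. f s + f (1 - s)) < integral {0..1} (\<lambda>s::real. 0::real)"
      proof (rule integral_less_real[OF cf c0 ne])
        fix s :: real
        have "\<phi> (\<mu> + k * s) < \<phi> (- (\<mu> + k * (1 - s)))" using 2 by (intro strict) (simp add: algebra_simps)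
        then show "f s + f (1 - s) < 0" unfolding f_def using odd[of "\<mu> + k * (1 - s)"] by linarith
      qed
      then show False using I0 Z by simp
    qed
  qed
qed

theorem proposition4p2:
  fixes N0 N1 \<nu>0 \<nu>1 g \<gamma> a lam \<mu> :: real and \<nu> :: "real \<Rightarrow> real"
  assumes "stretch_limited N0 N1 \<nu>0 \<nu>1 \<nu>"
    and "g > 0" and "\<gamma> > 0" and "0 < a" and "a < \<nu>1"
    and "lam > 0"
    and "((\<lambda>s. \<nu> (cat_delta g \<gamma> lam \<mu> s) / cat_delta g \<gamma> lam \<mu> s * lam) has_integral a) {0..1}"
    and "((\<lambda>s. \<nu> (cat_delta g \<gamma> lam \<mu> s) / cat_delta g \<gamma> lam \<mu> s * (\<mu> + g * \<gamma> * s))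
            has_integral 0) {0..1}"
  shows "(\<forall>s\<in>{0..1}. cat_delta g \<gamma> lam \<mu> s \<ge> N1) \<longleftrightarrow>
         (\<nu>1 * (2 * N1 / (g * \<gamma>)) * arsinh (g * \<gamma> / (2 * N1)) \<le> a \<and> a < \<nu>1)"
proof -
  define k where "k = g * \<gamma>"
  have k: "k > 0" unfolding k_def using assms(2,3) by simp
  from assms(1) have h: "0 < N1" "0 < \<nu>0" "1 < \<nu>1" "\<forall>N. \<nu>0 \<le> \<nu> N \<and> \<nu> N \<le> \<nu>1"
       "\<forall>N. N1 \<le> N \<longrightarrow> \<nu> N = \<nu>1"
    unfolding stretch_limited_def by blast+
  have pos: "\<nu> N > 0" for N using h(2,4) by (meson less_le_trans)
  note cont = nu_props(1)[OF assms(1)] and mono = nu_props(2)[OF assms(1)]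
  have int0: "((\<lambda>s. \<nu> (sqrt (lam\<^sup>2 + (\<mu> + k * s)\<^sup>2)) / sqrt (lam\<^sup>2 + (\<mu> + k * s)\<^sup>2) * (\<mu> + k * s))
            has_integral 0) {0..1}"
    using assms(8) unfolding cat_delta_def k_def .
  have mu: "\<mu> = - k / 2" by (rule mu_half[OF cont mono pos assms(6) k int0])
  have dl: "cat_delta g \<gamma> lam \<mu> s = sqrt (lam\<^sup>2 + (k * s - k/2)\<^sup>2)" for s
    unfolding cat_delta_def mu k_def by (simp add: algebra_simps)
  have dge: "cat_delta g \<gamma> lam \<mu> s \<ge> lam" for s
  proof -
    have "sqrt (lam\<^sup>2) \<le> sqrt (lam\<^sup>2 + (k * s - k/2)\<^sup>2)" by simp
    then show ?thesis unfolding dl using assms(6) by simp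
  qed
  have d12: "cat_delta g \<gamma> lam \<mu> (1/2) = lam" unfolding dl using assms(6) by simp
  have iffL: "(\<forall>s\<in>{0..1}. cat_delta g \<gamma> lam \<mu> s \<ge> N1) \<longleftrightarrow> lam \<ge> N1"
  proof
    assume "\<forall>s\<in>{0..1}. cat_delta g \<gamma> lam \<mu> s \<ge> N1"
    then have "cat_delta g \<gamma> lam \<mu> (1/2) \<ge> N1" by auto
    then show "lam \<ge> N1" using d12 by simp
  next
    assume "lam \<ge> N1"
    then show "\<forall>s\<in>{0..1}. cat_delta g \<gamma> lam \<mu> s \<ge> N1" using dge order_trans by blast
  qed
  have dpos: "cat_delta g \<gamma> lam \<mu> s > 0" for s using dge[of s] assms(6) by linarith
  have Qi: "((\<lambda>s. \<nu>1 * (lam / sqrt (lam\<^sup>2 + (k * s - k/2)\<^sup>2))) has_integral \<nu>1 * Qf k lam) {0..1}"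
    by (rule has_integral_mult_right[OF Q_full[OF assms(6) k]])
  have target: "\<nu>1 * (2 * N1 / (g * \<gamma>)) * arsinh (g * \<gamma> / (2 * N1)) = \<nu>1 * Qf k N1"
    unfolding Qf_def k_def by simp
  show ?thesis
  proof (cases "lam \<ge> N1")
    case True
    have eq: "\<nu> (cat_delta g \<gamma> lam \<mu> s) / cat_delta g \<gamma> lam \<mu> s * lam
        = \<nu>1 * (lam / sqrt (lam\<^sup>2 + (k * s - k/2)\<^sup>2))" for s
    proof -
      have "\<nu> (cat_delta g \<gamma> lam \<mu> s) = \<nu>1" using h(5) dge[of s] True by auto
      then show ?thesis unfolding dl by simp
    qed
    have "((\<lambda>s. \<nu>1 * (lam / sqrt (lam\<^sup>2 + (k * s - k/2)\<^sup>2))) has_integral a) {0..1}"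
      using assms(7) eq by simp
    then have aeq: "a = \<nu>1 * Qf k lam" using Qi has_integral_unique by blast
    have "Qf k N1 \<le> Qf k lam"
    proof (cases "lam = N1")
      case False
      then show ?thesis using Q_strict[OF h(1) _ k, of lam] True by simp
    qed simp
    then have "\<nu>1 * Qf k N1 \<le> a" unfolding aeq using h(3) by simp
    then show ?thesis using iffL True target assms(5) by simp
  next
    case False
    have "a \<le> \<nu>1 * Qf k lam"
    proof (rule has_integral_le[OF assms(7) Qi])
      fix s :: real
      have "\<nu> (cat_delta g \<gamma> lam \<mu> s) * (lam / cat_delta g \<gamma> lam \<mu> s)
          \<le> \<nu>1 * (lam / cat_delta g \<gamma> lam \<mu> s)"
        using h(4) dpos[of s] assms(6) by (intro mult_right_mono) auto
      then show "\<nu> (cat_delta g \<gamma> lam \<mu> s) / cat_delta g \<gamma> lam \<mu> s * lam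
          \<le> \<nu>1 * (lam / sqrt (lam\<^sup>2 + (k * s - k/2)\<^sup>2))"
        unfolding dl by simp
    qed
    also have "\<dots> < \<nu>1 * Qf k N1"
      using Q_strict[OF assms(6) _ k, of N1] False h(3) by simp
    finally show ?thesis using iffL False target by simp
  qed
qed

end
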